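(* Let $f$ be analytic on $\mathbb{D}$ with $\operatorname{Diam} f(\mathbb{D})\le 2$. Then for all $z\in\mathbb{D}$, \[ |f(z)-f(0)|\le |z|\,\frac{2}{1+\sqrt{1-|z|^2}}. \] Moreover, equality holds at some point $z\in\mathbb{D}\setminus\{0\}$ if and only if \[ f(z)=c\,\frac{z-b}{1-\bar b z}+a \quad (z\in\mathbb{D}) \] for some constants $a\in\mathbb{C}$, $b\in\mathbb{D}\setminus\{0\}$ and $c\in\mathbb{C}$ with $|c|=1$.
   Context: $\mathbb{D}$ is the open unit disk; $\operatorname{Diam}E=\sup_{z,w\in E}|z-w|$. *)

theory Defs
  imports "HOL-Complex_Analysis.Complex_Analysis"
begin

text \<open>Diam E = sup over z, w in E of |z - w|, taken in the extended reals
  (so that an unbounded set has diameter infinity).\<close>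
definition Diam :: "complex set \<Rightarrow> ereal" where
  "Diam E = (SUP z\<in>E. SUP w\<in>E. ereal (cmod (z - w)))"

end

theory Submission
  imports Defs
begin

lemma diam_le:
  assumes "Diam (f ` S) \<le> 2" "z \<in> S" "w \<in> S"
  shows "cmod (f z - f w) \<le> 2"
proof -
  have "ereal (cmod (f z - f w)) \<le> (SUP w'\<in>f ` S. ereal (cmod (f z - w')))"
    using assms by (intro SUP_upper) auto
  also have "\<dots> \<le> Diam (f ` S)"
    unfolding Diam_def using assms by (intro SUP_upper) auto
  finally have "ereal (cmod (f z - f w)) \<le> ereal 2" using assms(1) by (metis order_trans numeral_eq_ereal)
  then show ?thesis by simp
qed

lemma schwarz_closed:
  assumes holg: "g holomorphic_on ball 0 1" and g0: "g 0 = 0"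
    and le: "\<And>z. norm z < 1 \<Longrightarrow> norm (g z) \<le> 1" and z: "norm z < 1"
  shows "norm (g z) \<le> norm z"
proof (rule ccontr)
  assume "\<not> ?thesis"
  then have lt: "norm z < norm (g z)" by simp
  define e where "e = (norm (g z) - norm z) / 2"
  have e: "e > 0" using lt by (simp add: e_def)
  have n1e: "cmod (1 + complex_of_real e) = 1 + e"
  proof -
    have "cmod (complex_of_real (1+e)) = 1+e" using e by (simp only: norm_of_real)
    then show ?thesis by simp
  qed
  define h where "h = (\<lambda>w. g w / of_real (1 + e))"
  have "h holomorphic_on ball 0 1" unfolding h_def using holg e
    by (intro holomorphic_intros) auto
  moreover have "h 0 = 0" by (simp add: h_def g0)
  moreover have "norm (h w) < 1" if "norm w < 1" for w
  proof -
    have "norm (h w) = norm (g w) / (1 + e)" using e n1e by (simp add: h_def norm_divide)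
    also have "\<dots> < 1" using le[OF that] e by (simp add: field_simps)
    finally show ?thesis .
  qed
  ultimately have "norm (h z) \<le> norm z" using Schwarz_Lemma(1) z by blast
  then have "norm (g z) \<le> (1 + e) * norm z" using e n1e by (simp add: h_def norm_divide field_simps)
  moreover have "e * norm z < e" using e z by simp
  ultimately have "norm (g z) < norm z + e" by (simp add: algebra_simps)
  then show False using lt unfolding e_def by (simp add: field_simps)
qed

lemma key_id: "(cmod (1 - cnj a * u))\<^sup>2 - (cmod (u - a))\<^sup>2 = (1 - (cmod a)\<^sup>2) * (1 - (cmod u)\<^sup>2)"
proof -
  have "complex_of_real ((cmod (1 - cnj a * u))\<^sup>2 - (cmod (u - a))\<^sup>2) = complex_of_real ((1 - (cmod a)\<^sup>2) * (1 - (cmod u)\<^sup>2))"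
    unfolding of_real_diff of_real_mult of_real_1 complex_norm_square
    by (simp add: algebra_simps)
  then show ?thesis by (simp only: of_real_eq_iff)
qed

lemma mobius_bound:
  assumes holh: "h holomorphic_on ball 0 1" and le: "\<And>z. norm z < 1 \<Longrightarrow> norm (h z) \<le> 1"
    and a: "norm (h 0) < 1" and z: "norm z < 1"
  shows "norm (h z - h 0) \<le> norm z * (1 - (norm (h 0))\<^sup>2) / (1 - norm z)"
proof -
  define a where "a = h 0"
  have nz: "1 - cnj a * h w \<noteq> 0" if "norm w < 1" for w
  proof
    assume "1 - cnj a * h w = 0"
    then have "cnj a * h w = 1" by simp
    then have "norm (cnj a) * norm (h w) = 1" by (metis norm_mult norm_one)
    moreover have "norm (cnj a) * norm (h w) < 1"
      using a le[OF that] unfolding a_def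
      by (metis complex_mod_cnj mult_le_one norm_ge_zero order_le_less_trans order_less_imp_le mult_less_cancel_left2 mult.commute le_less_trans mult_left_le_one_le)
    ultimately show False by simp
  qed
  define K where "K = (\<lambda>w. (h w - a) / (1 - cnj a * h w))"
  have "K holomorphic_on ball 0 1" unfolding K_def using nz
    by (intro holomorphic_intros holh) auto
  moreover have "K 0 = 0" by (simp add: K_def a_def)
  moreover have "norm (K w) \<le> 1" if "norm w < 1" for w
  proof -
    have "(cmod (1 - cnj a * h w))\<^sup>2 - (cmod (h w - a))\<^sup>2 \<ge> 0"
      unfolding key_id using a le[OF that] unfolding a_def
      by (intro mult_nonneg_nonneg) (auto simp: power_le_one abs_square_le_1)
    then have "cmod (h w - a) \<le> cmod (1 - cnj a * h w)"
      by (simp add: power_mono_iff abs_le_square_iff)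
    then show ?thesis using nz[OF that] by (simp add: K_def norm_divide divide_le_eq_1)
  qed
  ultimately have "norm (K z) \<le> norm z" using schwarz_closed z by blast
  then have X: "norm (h z - a) \<le> norm z * cmod (1 - cnj a * h z)"
    using nz[OF z] by (simp add: K_def norm_divide divide_le_eq)
  have ca: "complex_of_real (1 - (cmod a)\<^sup>2) = 1 - cnj a * a"
  proof -
    have "complex_of_real ((cmod a)\<^sup>2) = cnj a * a" by (subst complex_norm_square) (rule mult.commute)
    then show ?thesis by (simp only: of_real_diff of_real_1)
  qed
  have eq: "1 - cnj a * h z = complex_of_real (1 - (cmod a)\<^sup>2) - cnj a * (h z - a)"
    unfolding ca by (simp add: algebra_simps)
  have "cmod (1 - cnj a * h z) \<le> cmod (complex_of_real (1 - (cmod a)\<^sup>2)) + cmod (cnj a * (h z - a))"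
    unfolding eq by (rule norm_triangle_ineq4)
  moreover have "cmod (complex_of_real (1 - (cmod a)\<^sup>2)) = 1 - (cmod a)\<^sup>2"
  proof -
    have "(cmod a)\<^sup>2 \<le> 1" using a unfolding a_def by (simp add: power_le_one less_imp_le)
    then show ?thesis by (simp only: norm_of_real)
  qed
  moreover have "cmod (cnj a * (h z - a)) = cmod a * cmod (h z - a)" by (simp add: norm_mult)
  ultimately have "cmod (1 - cnj a * h z) \<le> (1 - (cmod a)\<^sup>2) + cmod a * cmod (h z - a)" by simp
  then have "norm (h z - a) \<le> norm z * ((1 - (cmod a)\<^sup>2) + cmod a * cmod (h z - a))"
    using X by (meson mult_left_mono norm_ge_zero order_trans)
  then have "norm (h z - a) * (1 - norm z * cmod a) \<le> norm z * (1 - (cmod a)\<^sup>2)"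
    by (simp add: algebra_simps)
  moreover have "norm (h z - a) * (1 - norm z) \<le> norm (h z - a) * (1 - norm z * cmod a)"
  proof (rule mult_left_mono)
    have "norm z * cmod a \<le> norm z" using a unfolding a_def by (intro mult_left_le) auto
    then show "1 - norm z \<le> 1 - norm z * cmod a" by linarith
  qed simp
  ultimately have "norm (h z - a) * (1 - norm z) \<le> norm z * (1 - (cmod a)\<^sup>2)" by linarith
  then show ?thesis using z unfolding a_def by (simp add: le_divide_eq)
qed

lemma parallelogram_unit:
  assumes "cmod l = 1"
  shows "(cmod (1 + l))\<^sup>2 + (cmod (1 - l))\<^sup>2 = 4"
proof -
  have ll: "l * cnj l = 1" using assms complex_norm_square[of l] by simp
  have "complex_of_real ((cmod (1 + l))\<^sup>2 + (cmod (1 - l))\<^sup>2) = (1 + l) * cnj (1 + l) + (1 - l) * cnj (1 - l)"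
    unfolding of_real_add complex_norm_square by simp
  also have "\<dots> = 2 + 2 * (l * cnj l)" by (simp add: algebra_simps)
  also have "\<dots> = complex_of_real 4" using ll by simp
  finally show ?thesis by (simp only: of_real_eq_iff)
qed

lemma exp_i_bound: "cmod (1 - exp (\<i> * complex_of_real s)) \<le> \<bar>s\<bar>"
proof -
  have "cmod (1 - exp (\<i> * complex_of_real s)) = cmod (exp (\<i> * complex_of_real s) - 1)"
    by (simp add: norm_minus_commute)
  also have "\<dots> = 2 * \<bar>sin (s / 2)\<bar>" by (rule dist_exp_i_1)
  also have "\<dots> \<le> 2 * \<bar>s / 2\<bar>" using abs_sin_x_le_abs_x[of "s/2"] by simp
  finally show ?thesis by simp
qed

lemma step1:
  assumes holF: "F holomorphic_on ball 0 1"
    and diam: "\<And>z w. z \<in> ball 0 1 \<Longrightarrow> w \<in> ball 0 1 \<Longrightarrow> cmod (F z - F w) \<le> 2"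
    and odd: "\<And>z. z \<in> ball 0 1 \<Longrightarrow> F z - F (-z) = 2 * \<alpha> * z" and al: "cmod \<alpha> = 1"
    and z: "cmod \<zeta> < 1" and l: "cmod l = 1" and l1: "l \<noteq> 1" and z0: "\<zeta> \<noteq> 0"
  shows "cmod ((F \<zeta> - \<alpha>*\<zeta>) - (F (l*\<zeta>) - \<alpha>*(l*\<zeta>))) \<le> (cmod (1 - l))\<^sup>2 / (2*(1 - cmod \<zeta>))"
proof -
  define L where "L = (\<lambda>w. (F w - F (-(l*w))) / 2)"
  have ml: "(\<lambda>w. -(l*w)) ` ball 0 1 \<subseteq> ball 0 1" using l by (auto simp: norm_mult)
  have holL: "L holomorphic_on ball 0 1"
  proof -
    have "(F \<circ> (\<lambda>w. -(l*w))) holomorphic_on ball 0 1"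
      by (rule holomorphic_on_compose_gen[OF _ holF ml]) (intro holomorphic_intros)
    then show ?thesis unfolding L_def o_def by (intro holomorphic_intros holF) auto
  qed
  have L0: "L 0 = 0" by (simp add: L_def)
  have Lle: "cmod (L w) \<le> 1" if "cmod w < 1" for w
  proof -
    have "-(l*w) \<in> ball 0 1" using l that by (simp add: norm_mult)
    then have "cmod (F w - F (-(l*w))) \<le> 2" using diam that by auto
    then show ?thesis by (simp add: L_def norm_divide)
  qed
  define F' where "F' = deriv F 0"
  have dF: "(F has_field_derivative F') (at x)" if "x = 0" for x
    unfolding F'_def that by (rule holomorphic_derivI[OF holF]) auto
  have dFm: "((\<lambda>w. F (-(c*w))) has_field_derivative F' * (-c)) (at 0)" for c
    by (rule DERIV_chain2[OF dF]) (auto intro!: derivative_eq_intros)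
  have "((\<lambda>w. F w - F (-(1*w))) has_field_derivative F' - F' * (-1)) (at 0)"
    by (intro derivative_intros dF dFm) auto
  then have "((\<lambda>w. 2 * \<alpha> * w) has_field_derivative F' - F' * (-1)) (at 0)"
    by (rule has_field_derivative_transform_within_open[of _ _ _ "ball 0 1"]) (auto simp: odd)
  moreover have "((\<lambda>w. 2 * \<alpha> * w) has_field_derivative 2 * \<alpha>) (at 0)"
    by (auto intro!: derivative_eq_intros)
  ultimately have "F' - F' * (-1) = 2 * \<alpha>" by (rule DERIV_unique)
  then have F'a: "F' = \<alpha>" by simp
  have "((\<lambda>w. F w - F (-(l*w))) has_field_derivative F' - F' * (-l)) (at 0)"
    by (intro derivative_intros dF dFm) auto
  then have "(L has_field_derivative (F' - F' * (-l)) / 2) (at 0)"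
    unfolding L_def by (rule DERIV_cdivide)
  then have dL: "deriv L 0 = \<alpha> * (1 + l) / 2" using F'a by (simp add: DERIV_imp_deriv algebra_simps)
  define h where "h = (\<lambda>w. if w = 0 then deriv L 0 else (L w - L 0) / (w - 0))"
  have holh: "h holomorphic_on ball 0 1" unfolding h_def by (rule pole_lemma[OF holL]) auto
  have h0: "h 0 = \<alpha> * (1 + l) / 2" by (simp add: h_def dL)
  have nh0: "cmod (h 0) = cmod (1 + l) / 2" by (simp add: h0 norm_mult norm_divide al)
  have par: "(cmod (1 + l))\<^sup>2 + (cmod (1 - l))\<^sup>2 = 4" by (rule parallelogram_unit[OF l])
  have pos: "cmod (1 - l) > 0" using l1 by simp
  have B: "(cmod (1 - l))\<^sup>2 > 0" using pos by simp
  have "(cmod (1 + l))\<^sup>2 < 4" using par B by linarith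
  then have "(cmod (1 + l))\<^sup>2 < 2\<^sup>2" by simp
  then have lt2: "cmod (1 + l) < 2" by (rule power_less_imp_less_base) auto
  have hle: "cmod (h w) \<le> 1" if "cmod w < 1" for w
  proof (cases "w = 0")
    case True then show ?thesis using nh0 lt2 by simp
  next
    case False
    have "cmod (L w) \<le> cmod w" by (rule schwarz_closed[OF holL L0 Lle that])
    then show ?thesis using False by (simp add: h_def L0 norm_divide divide_le_eq_1)
  qed
  have hlt: "cmod (h 0) < 1" using nh0 lt2 by simp
  have mb: "cmod (h \<zeta> - h 0) \<le> cmod \<zeta> * (1 - (cmod (h 0))\<^sup>2) / (1 - cmod \<zeta>)"
    by (rule mobius_bound[OF holh hle hlt z])
  have q0: "cmod (1 + l) = 2 * cmod (h 0)" using nh0 by simp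
  have q: "(cmod (h 0))\<^sup>2 * 4 = (cmod (1 + l))\<^sup>2" unfolding q0 by (simp add: power2_eq_square)
  have one: "1 - (cmod (h 0))\<^sup>2 = (cmod (1 - l))\<^sup>2 / 4" using q par by linarith
  have lz: "l * \<zeta> \<in> ball 0 1" using l z by (simp add: norm_mult)
  have ev: "F (-(l*\<zeta>)) = F (l*\<zeta>) - 2 * \<alpha> * (l*\<zeta>)" using odd[OF lz] by (simp add: algebra_simps)
  have "h \<zeta> - h 0 = ((F \<zeta> - \<alpha>*\<zeta>) - (F (l*\<zeta>) - \<alpha>*(l*\<zeta>))) / (2 * \<zeta>)"
  proof -
    have hz: "h \<zeta> = L \<zeta> / \<zeta>" using z0 by (simp add: h_def L0)
    have Lz: "L \<zeta> = (F \<zeta> - (F (l*\<zeta>) - 2 * \<alpha> * (l*\<zeta>))) / 2" unfolding L_def ev ..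
    show ?thesis unfolding hz h0 Lz using z0 by (simp add: field_simps)
  qed
  then have "(h \<zeta> - h 0) * (2 * \<zeta>) = ((F \<zeta> - \<alpha>*\<zeta>) - (F (l*\<zeta>) - \<alpha>*(l*\<zeta>)))"
    using z0 by (subst (asm) eq_divide_eq) simp
  then have "cmod ((F \<zeta> - \<alpha>*\<zeta>) - (F (l*\<zeta>) - \<alpha>*(l*\<zeta>))) = cmod (h \<zeta> - h 0) * (2 * cmod \<zeta>)"
    by (metis norm_mult norm_numeral mult.assoc)
  also have "\<dots> = 2 * cmod \<zeta> * cmod (h \<zeta> - h 0)" by simp
  also have "\<dots> \<le> 2 * cmod \<zeta> * (cmod \<zeta> * ((cmod (1 - l))\<^sup>2 / 4) / (1 - cmod \<zeta>))"
    using mb one by (intro mult_left_mono) auto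
  also have "\<dots> = (cmod \<zeta>)\<^sup>2 * ((cmod (1 - l))\<^sup>2 / (2 * (1 - cmod \<zeta>)))"
    using z by (simp add: power2_eq_square field_simps)
  also have "\<dots> \<le> 1 * ((cmod (1 - l))\<^sup>2 / (2 * (1 - cmod \<zeta>)))"
    using z by (intro mult_right_mono) (auto simp: power_le_one)
  finally show ?thesis by simp
qed

lemma rot_const:
  fixes E :: "complex \<Rightarrow> complex"
  assumes bnd: "\<And>\<mu> s. cmod \<mu> = r \<Longrightarrow> cmod (E \<mu> - E (exp(\<i> * of_real s) * \<mu>)) \<le> K * s\<^sup>2"
    and zr: "cmod \<zeta> = r"
  shows "E (exp(\<i> * of_real t) * \<zeta>) = E \<zeta>"
proof -
  have K: "K \<ge> 0" using order_trans[OF norm_ge_zero bnd[OF zr, of 1]] by simp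
  have main: "cmod (E (exp(\<i> * of_real (real k * u)) * \<zeta>) - E \<zeta>) \<le> real k * (K * u\<^sup>2)" for k u
  proof (induction k)
    case 0 then show ?case by simp
  next
    case (Suc k)
    define \<mu> where "\<mu> = exp(\<i> * of_real (real k * u)) * \<zeta>"
    have mr: "cmod \<mu> = r" using zr by (simp add: \<mu>_def norm_mult)
    have ex: "exp(\<i> * of_real (real (Suc k) * u)) * \<zeta> = exp(\<i> * of_real u) * \<mu>"
      by (simp add: \<mu>_def algebra_simps flip: exp_add)
    have "cmod (E (exp(\<i> * of_real (real (Suc k) * u)) * \<zeta>) - E \<zeta>)
        \<le> cmod (E \<mu> - E (exp(\<i> * of_real u) * \<mu>)) + cmod (E \<mu> - E \<zeta>)"
    proof -
      have "E (exp(\<i> * of_real u) * \<mu>) - E \<zeta> = (E (exp(\<i> * of_real u) * \<mu>) - E \<mu>) + (E \<mu> - E \<zeta>)" by simp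
      then have "cmod (E (exp(\<i> * of_real u) * \<mu>) - E \<zeta>) \<le> cmod (E (exp(\<i> * of_real u) * \<mu>) - E \<mu>) + cmod (E \<mu> - E \<zeta>)"
        by (metis norm_triangle_ineq)
      then show ?thesis unfolding ex by (simp add: norm_minus_commute)
    qed
    also have "\<dots> \<le> K * u\<^sup>2 + real k * (K * u\<^sup>2)"
      using bnd[OF mr, of u] Suc.IH unfolding \<mu>_def by (intro add_mono) auto
    finally show ?case by (simp add: algebra_simps)
  qed
  show ?thesis
  proof (rule ccontr)
    assume ne: "\<not> ?thesis"
    define d where "d = cmod (E (exp(\<i> * of_real t) * \<zeta>) - E \<zeta>)"
    have d: "d > 0" using ne by (simp add: d_def)
    obtain n :: nat where n: "K * t\<^sup>2 / d < real n" using reals_Archimedean2 by blast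
    have npos: "real n > 0" using n d K by (smt (verit) divide_nonneg_pos zero_le_power2 mult_nonneg_nonneg)
    have "d \<le> real n * (K * (t / real n)\<^sup>2)"
      using main[of n "t / real n"] npos unfolding d_def by simp
    also have "\<dots> = K * t\<^sup>2 / real n" using npos by (simp add: power2_eq_square field_simps)
    finally have "d * real n \<le> K * t\<^sup>2" using npos by (simp add: le_divide_eq)
    moreover have "K * t\<^sup>2 < d * real n" using n d by (simp add: divide_less_eq mult.commute)
    ultimately show False by simp
  qed
qed

lemma circle_const:
  fixes E :: "complex \<Rightarrow> complex"
  assumes holE: "E holomorphic_on ball 0 1"
    and rot: "\<And>\<zeta> t. cmod \<zeta> < 1 \<Longrightarrow> E (exp(\<i> * of_real t) * \<zeta>) = E \<zeta>"
    and z: "cmod \<zeta> < 1"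
  shows "E \<zeta> = E 0"
proof (cases "\<zeta> = 0")
  case True then show ?thesis by simp
next
  case False
  define r where "r = cmod \<zeta>"
  define g where "g = (\<lambda>w. E w - E \<zeta>)"
  have sub: "cball 0 r \<subseteq> ball 0 1" using z by (auto simp: r_def)
  have holg: "g holomorphic_on ball 0 1" unfolding g_def by (intro holomorphic_intros holE)
  have "norm (g 0) \<le> 0"
  proof (rule maximum_modulus_frontier[of g "cball 0 r"])
    show "g holomorphic_on interior (cball 0 r)"
    proof -
      have "ball 0 r \<subseteq> ball 0 1" using sub by auto
      then show ?thesis using holg by (auto intro: holomorphic_on_subset)
    qed
    show "continuous_on (closure (cball 0 r)) g"
      using holomorphic_on_imp_continuous_on[OF holg] sub by (auto intro: continuous_on_subset)
    show "bounded (cball (0::complex) r)" by simp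
    show "0 \<in> cball (0::complex) r" by (simp add: r_def)
    fix w :: complex assume "w \<in> frontier (cball 0 r)"
    then have wr: "cmod w = cmod \<zeta>" by (simp add: r_def)
    then have "cmod (w / \<zeta>) = 1" using False by (simp add: norm_divide)
    then obtain t where t: "w / \<zeta> = Complex (cos t) (sin t)" by (rule complex_unimodular_polar)
    have "Complex (cos t) (sin t) = exp(\<i> * of_real t)" by (simp add: cis.code[symmetric] cis_conv_exp)
    then have "w = exp(\<i> * of_real t) * \<zeta>" using t False by (simp add: field_simps)
    then show "norm (g w) \<le> 0" using rot[OF z] by (simp add: g_def)
  qed
  then show ?thesis by (simp add: g_def)
qed

lemma odd_rigid:
  assumes holF: "F holomorphic_on ball 0 1"
    and diam: "\<And>z w. z \<in> ball 0 1 \<Longrightarrow> w \<in> ball 0 1 \<Longrightarrow> cmod (F z - F w) \<le> 2"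
    and odd: "\<And>z. z \<in> ball 0 1 \<Longrightarrow> F z - F (-z) = 2 * \<alpha> * z" and al: "cmod \<alpha> = 1"
    and z: "cmod \<zeta> < 1"
  shows "F \<zeta> = \<alpha> * \<zeta> + F 0"
proof -
  define E where "E = (\<lambda>\<zeta>. F \<zeta> - \<alpha> * \<zeta>)"
  have holE: "E holomorphic_on ball 0 1" unfolding E_def by (intro holomorphic_intros holF)
  have rot: "E (exp(\<i> * of_real t) * \<xi>) = E \<xi>" if xi: "cmod \<xi> < 1" for \<xi> t
  proof (rule rot_const[where r = "cmod \<xi>" and K = "1 / (2 * (1 - cmod \<xi>))"])
    show "cmod \<xi> = cmod \<xi>" ..
    fix \<mu> s assume mr: "cmod \<mu> = cmod \<xi>"
    have K: "1 / (2 * (1 - cmod \<xi>)) \<ge> 0" using xi by simp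
    show "cmod (E \<mu> - E (exp (\<i> * complex_of_real s) * \<mu>)) \<le> 1 / (2 * (1 - cmod \<xi>)) * s\<^sup>2"
    proof (cases "\<mu> = 0 \<or> exp (\<i> * complex_of_real s) = 1")
      case True
      then have "E \<mu> - E (exp (\<i> * complex_of_real s) * \<mu>) = 0" by auto
      then show ?thesis using K by simp
    next
      case False
      have m1: "cmod \<mu> < 1" using mr xi by simp
      have "cmod (E \<mu> - E (exp (\<i> * complex_of_real s) * \<mu>))
          \<le> (cmod (1 - exp (\<i> * complex_of_real s)))\<^sup>2 / (2*(1 - cmod \<mu>))"
        unfolding E_def using False
        by (intro step1[OF holF diam odd al m1]) auto
      also have "\<dots> \<le> s\<^sup>2 / (2*(1 - cmod \<mu>))"
      proof (rule divide_right_mono)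
        have "(cmod (1 - exp (\<i> * complex_of_real s)))\<^sup>2 \<le> \<bar>s\<bar>\<^sup>2"
          by (rule power_mono[OF exp_i_bound]) simp
        then show "(cmod (1 - exp (\<i> * complex_of_real s)))\<^sup>2 \<le> s\<^sup>2" by simp
      qed (use m1 in simp)
      finally show ?thesis using mr by simp
    qed
  qed
  have "E \<zeta> = E 0" by (rule circle_const[OF holE rot z]) simp
  then show ?thesis by (simp add: E_def algebra_simps)
qed

lemma norm_1_plus_real: "0 \<le> s \<Longrightarrow> cmod (1 + complex_of_real s) = 1 + s"
proof -
  assume s: "0 \<le> s"
  have "cmod (complex_of_real (1+s)) = \<bar>1+s\<bar>" by (rule norm_of_real)
  then show ?thesis using s by simp
qed

lemma half_point:
  assumes z: "cmod z < 1"
  defines "s \<equiv> sqrt (1 - (cmod z)\<^sup>2)"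
  defines "p \<equiv> z / complex_of_real (1 + s)"
  shows "cmod p = cmod z / (1 + s)" "cmod p < 1" "Moebius_function 0 (-p) p = z"
proof -
  have z2: "(cmod z)\<^sup>2 \<le> 1" using z by (intro power_le_one) auto
  have s0: "s \<ge> 0" unfolding s_def using z2 by simp
  have s2: "s\<^sup>2 = 1 - (cmod z)\<^sup>2" unfolding s_def using z2 by simp
  have np: "cmod p = cmod z / (1 + s)" unfolding p_def using s0 by (simp add: norm_divide norm_1_plus_real)
  then show "cmod p = cmod z / (1 + s)" .
  show "cmod p < 1" using np s0 z by (simp add: divide_less_eq)
  have cp: "cnj p * p = complex_of_real ((cmod z / (1 + s))\<^sup>2)"
    by (metis complex_norm_square mult.commute np)
  have "(cmod z / (1 + s))\<^sup>2 = (1 - s\<^sup>2) / (1 + s)\<^sup>2" using s2 by (simp add: power_divide)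
  also have "\<dots> = ((1 - s) * (1 + s)) / ((1 + s) * (1 + s))"
    by (simp add: power2_eq_square algebra_simps)
  also have "\<dots> = (1 - s) / (1 + s)" using s0 by (intro nonzero_mult_divide_mult_cancel_right) simp
  finally have "1 + (cmod z / (1 + s))\<^sup>2 = 2 / (1 + s)" using s0 by (simp add: field_simps)
  then have hR: "1 + (cmod z / (1 + s))\<^sup>2 = 2 / (1 + s)" .
  have "1 - cnj (-p) * p = 1 + cnj p * p" by simp
  also have "\<dots> = complex_of_real (1 + (cmod z / (1 + s))\<^sup>2)" unfolding cp by (simp only: of_real_add of_real_1)
  also have "\<dots> = complex_of_real (2 / (1 + s))" unfolding hR ..
  finally have den: "1 - cnj (-p) * p = complex_of_real (2 / (1 + s))" .
  have "Moebius_function 0 (-p) p = (p - -p) / (1 - cnj (-p) * p)"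
    by (rule Moebius_function_simple)
  also have "\<dots> = (p + p) / complex_of_real (2 / (1 + s))" unfolding den by simp
  also have "\<dots> = z"
  proof -
    define q where "q = complex_of_real (1 + s)"
    have q0: "q \<noteq> 0" unfolding q_def using s0 by (simp only: of_real_eq_0_iff)
    have "complex_of_real (2 / (1 + s)) = 2 / q" unfolding q_def by (simp only: of_real_divide of_real_numeral)
    moreover have "p = z / q" unfolding p_def q_def ..
    ultimately show ?thesis using q0 by (simp add: field_simps)
  qed
  finally show "Moebius_function 0 (-p) p = z" .
qed

lemma mobius_extremal:
  assumes b: "b \<in> ball 0 1 - {0}" and c: "cmod c = 1"
    and f: "\<forall>z\<in>ball 0 1. f z = c * ((z - b) / (1 - cnj b * z)) + a"
  shows "\<exists>z\<in>ball 0 1 - {0}. cmod (f z - f 0) = cmod z * (2 / (1 + sqrt (1 - (cmod z)\<^sup>2)))"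
proof -
  define \<rho> where "\<rho> = cmod b"
  have r0: "0 < \<rho>" "\<rho> < 1" using b by (auto simp: \<rho>_def)
  define k where "k = 2 / (1 + \<rho>\<^sup>2)"
  define z0 where "z0 = b * complex_of_real k"
  have k0: "k > 0" unfolding k_def by (simp add: add_pos_nonneg)
  have nzk: "cmod z0 = \<rho> * k" using k0 by (simp add: z0_def norm_mult \<rho>_def)
  then have nz0: "cmod z0 = 2 * \<rho> / (1 + \<rho>\<^sup>2)" by (simp add: k_def)
  have lt: "2 * \<rho> < 1 + \<rho>\<^sup>2"
  proof -
    have "0 < (1 - \<rho>)\<^sup>2" using r0 by simp
    then show ?thesis by (simp add: power2_eq_square algebra_simps)
  qed
  have z0in: "cmod z0 < 1" using lt nz0 by (simp add: divide_less_eq add_pos_nonneg)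
  have z0ne: "z0 \<noteq> 0" using k0 r0 by (simp add: z0_def \<rho>_def)
  define m where "m = (1 - \<rho>\<^sup>2) / (1 + \<rho>\<^sup>2)"
  have "\<rho>\<^sup>2 < 1\<^sup>2" using r0 by (intro power_strict_mono) auto
  then have r2: "\<rho>\<^sup>2 < 1" by simp
  have m0: "m > 0" unfolding m_def using r2 by (simp add: add_pos_nonneg)
  have cb: "cnj b * b = complex_of_real (\<rho>\<^sup>2)" unfolding \<rho>_def by (metis complex_norm_square mult.commute)
  have pp: "1 + \<rho>\<^sup>2 \<noteq> 0" by (simp add: add_pos_nonneg order.strict_implies_not_eq[symmetric])
  have km: "1 - \<rho>\<^sup>2 * k = m" "k - 1 = m"
    using pp unfolding k_def m_def by (simp_all add: field_simps)
  have d1: "1 - cnj b * z0 = complex_of_real m"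
  proof -
    have "1 - cnj b * z0 = 1 - (cnj b * b) * complex_of_real k" by (simp add: z0_def mult.assoc)
    also have "\<dots> = complex_of_real (1 - \<rho>\<^sup>2 * k)" unfolding cb by simp
    finally show ?thesis unfolding km .
  qed
  have d2: "z0 - b = b * complex_of_real m"
  proof -
    have "z0 - b = b * complex_of_real (k - 1)" by (simp add: z0_def algebra_simps)
    then show ?thesis unfolding km .
  qed
  have q: "(z0 - b) / (1 - cnj b * z0) = b" unfolding d1 d2 using m0 by simp
  have "f z0 = c * ((z0 - b) / (1 - cnj b * z0)) + a" by (rule bspec[OF f]) (use z0in in simp)
  then have fz0: "f z0 = c * b + a" unfolding q .
  have f0: "f 0 = - c * b + a" using f by simp
  have "f z0 - f 0 = 2 * c * b" unfolding fz0 f0 by simp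
  then have lhs: "cmod (f z0 - f 0) = 2 * \<rho>" using c by (simp add: norm_mult \<rho>_def)
  have ri: "(2 * \<rho>)\<^sup>2 + (1 - \<rho>\<^sup>2)\<^sup>2 = (1 + \<rho>\<^sup>2)\<^sup>2" by (simp add: power2_eq_square algebra_simps)
  have "(2 * \<rho> / (1 + \<rho>\<^sup>2))\<^sup>2 + m\<^sup>2 = ((2 * \<rho>)\<^sup>2 + (1 - \<rho>\<^sup>2)\<^sup>2) / (1 + \<rho>\<^sup>2)\<^sup>2"
    unfolding m_def by (simp add: power_divide add_divide_distrib)
  also have "\<dots> = 1" unfolding ri using pp by simp
  finally have "1 - (cmod z0)\<^sup>2 = m\<^sup>2" unfolding nz0 by linarith
  then have "sqrt (1 - (cmod z0)\<^sup>2) = m" using m0 by simp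
  moreover have "1 + m = k" using km(2) by simp
  ultimately have "cmod z0 * (2 / (1 + sqrt (1 - (cmod z0)\<^sup>2))) = \<rho> * k * (2 / k)"
    unfolding nzk by simp
  also have "\<dots> = 2 * \<rho>" using k0 by simp
  finally have "cmod z0 * (2 / (1 + sqrt (1 - (cmod z0)\<^sup>2))) = 2 * \<rho>" .
  then show ?thesis using lhs z0in z0ne by (intro bexI[of _ z0]) auto
qed

lemma G_props:
  assumes holf: "f holomorphic_on ball 0 1"
    and diam: "\<And>z w. z \<in> ball 0 1 \<Longrightarrow> w \<in> ball 0 1 \<Longrightarrow> cmod (f z - f w) \<le> 2"
    and p: "cmod p < 1"
    and F_def: "F = (\<lambda>\<zeta>. f (Moebius_function 0 (-p) \<zeta>))"
  shows "F holomorphic_on ball 0 1"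
    and "\<And>z w. z \<in> ball 0 1 \<Longrightarrow> w \<in> ball 0 1 \<Longrightarrow> cmod (F z - F w) \<le> 2"
    and "(\<lambda>\<zeta>. (F \<zeta> - F (-\<zeta>)) / 2) holomorphic_on ball 0 1"
    and "\<And>\<zeta>. cmod \<zeta> < 1 \<Longrightarrow> cmod ((F \<zeta> - F (-\<zeta>)) / 2) < 1"
    and "F (-p) = f 0"
proof -
  have mp: "cmod (-p) < 1" using p by simp
  have img: "Moebius_function 0 (-p) ` ball 0 1 \<subseteq> ball 0 1"
    using Moebius_function_norm_lt_1[OF mp] by auto
  have "(f \<circ> Moebius_function 0 (-p)) holomorphic_on ball 0 1"
    by (rule holomorphic_on_compose_gen[OF Moebius_function_holomorphic[OF mp] holf img])
  then show holF: "F holomorphic_on ball 0 1" by (simp add: F_def o_def)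
  show diamF: "\<And>z w. z \<in> ball 0 1 \<Longrightarrow> w \<in> ball 0 1 \<Longrightarrow> cmod (F z - F w) \<le> 2"
    unfolding F_def using img diam by blast
  have "(F \<circ> uminus) holomorphic_on ball 0 1"
    by (rule holomorphic_on_compose_gen[OF _ holF]) (auto intro: holomorphic_intros)
  then show holG: "(\<lambda>\<zeta>. (F \<zeta> - F (-\<zeta>)) / 2) holomorphic_on ball 0 1"
    by (intro holomorphic_intros holF) (auto simp: o_def)
  show "cmod ((F \<zeta> - F (-\<zeta>)) / 2) < 1" if z: "cmod \<zeta> < 1" for \<zeta>
  proof -
    have "cmod ((F \<zeta> - F (-\<zeta>)) / 2) \<le> cmod \<zeta>"
    proof (rule schwarz_closed[OF holG _ _ z])
      show "(F 0 - F (- 0)) / 2 = 0" by simp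
      fix w :: complex assume "cmod w < 1"
      then show "cmod ((F w - F (- w)) / 2) \<le> 1" using diamF[of w "-w"] by (simp add: norm_divide)
    qed
    then show ?thesis using z by simp
  qed
  show "F (-p) = f 0" unfolding F_def by (simp add: Moebius_function_eq_zero)
qed

theorem theorem6:
  fixes f :: "complex \<Rightarrow> complex"
  assumes "f analytic_on ball 0 1"
    and "Diam (f ` ball 0 1) \<le> 2"
  shows "(\<forall>z\<in>ball 0 1. cmod (f z - f 0) \<le> cmod z * (2 / (1 + sqrt (1 - (cmod z)\<^sup>2))))
    \<and> ((\<exists>z\<in>ball 0 1 - {0}. cmod (f z - f 0) = cmod z * (2 / (1 + sqrt (1 - (cmod z)\<^sup>2))))
        \<longleftrightarrow> (\<exists>a b c. b \<in> ball 0 1 - {0} \<and> cmod c = 1 \<and>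
               (\<forall>z\<in>ball 0 1. f z = c * ((z - b) / (1 - cnj b * z)) + a)))"
proof -
  have holf: "f holomorphic_on ball 0 1" using assms(1) by (simp add: analytic_imp_holomorphic)
  have diam: "\<And>z w. z \<in> ball 0 1 \<Longrightarrow> w \<in> ball 0 1 \<Longrightarrow> cmod (f z - f w) \<le> 2"
    using diam_le[OF assms(2)] by blast
  have main: "cmod (f z - f 0) \<le> cmod z * (2 / (1 + sqrt (1 - (cmod z)\<^sup>2)))
     \<and> (cmod (f z - f 0) = cmod z * (2 / (1 + sqrt (1 - (cmod z)\<^sup>2))) \<longrightarrow> z \<noteq> 0 \<longrightarrow>
         (\<exists>a b c. b \<in> ball 0 1 - {0} \<and> cmod c = 1 \<and>
               (\<forall>z\<in>ball 0 1. f z = c * ((z - b) / (1 - cnj b * z)) + a)))"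
    if z: "cmod z < 1" for z
  proof -
    define s where "s = sqrt (1 - (cmod z)\<^sup>2)"
    define p where "p = z / complex_of_real (1 + s)"
    have s0: "s \<ge> 0" unfolding s_def using z by (simp add: power_le_one less_imp_le)
    have np: "cmod p = cmod z / (1 + s)" and p1: "cmod p < 1" and mp: "Moebius_function 0 (-p) p = z"
      using half_point[OF z] unfolding s_def p_def by auto
    define F where "F = (\<lambda>\<zeta>. f (Moebius_function 0 (-p) \<zeta>))"
    note GP = G_props[OF holf diam p1 F_def]
    define G where "G = (\<lambda>\<zeta>. (F \<zeta> - F (-\<zeta>)) / 2)"
    have holG: "G holomorphic_on ball 0 1" using GP(3) by (simp add: G_def)
    have G0: "G 0 = 0" by (simp add: G_def)
    have Glt: "\<And>\<zeta>. cmod \<zeta> < 1 \<Longrightarrow> cmod (G \<zeta>) < 1" using GP(4) by (simp add: G_def)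
    have Gp: "G p = (f z - f 0) / 2" unfolding G_def using GP(5) by (simp add: F_def mp)
    have "cmod (G p) \<le> cmod p" by (rule Schwarz_Lemma(1)[OF holG G0 Glt p1])
    then have le: "cmod (f z - f 0) \<le> 2 * cmod p" by (simp add: Gp norm_divide)
    have rhs: "cmod z * (2 / (1 + s)) = 2 * cmod p" unfolding np by simp
    show ?thesis
    proof (intro conjI impI)
      show "cmod (f z - f 0) \<le> cmod z * (2 / (1 + sqrt (1 - (cmod z)\<^sup>2)))"
        using le rhs by (simp add: s_def)
      assume eq: "cmod (f z - f 0) = cmod z * (2 / (1 + sqrt (1 - (cmod z)\<^sup>2)))" and z0: "z \<noteq> 0"
      have p0: "p \<noteq> 0" using z0 s0 np by auto
      have "cmod (G p) = cmod p" using eq rhs by (simp add: Gp norm_divide s_def)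
      then obtain \<alpha> where al: "\<forall>\<zeta>. cmod \<zeta> < 1 \<longrightarrow> G \<zeta> = \<alpha> * \<zeta>" and na: "cmod \<alpha> = 1"
        using Schwarz_Lemma(3)[OF holG G0 Glt p1] p1 p0 by blast
      have odd: "F \<zeta> - F (-\<zeta>) = 2 * \<alpha> * \<zeta>" if "\<zeta> \<in> ball 0 1" for \<zeta>
      proof -
        have "G \<zeta> = \<alpha> * \<zeta>" using al that by simp
        then have "(F \<zeta> - F (-\<zeta>)) / 2 = \<alpha> * \<zeta>" by (simp add: G_def)
        then show ?thesis by (simp add: field_simps)
      qed
      have Fl: "F \<zeta> = \<alpha> * \<zeta> + F 0" if "cmod \<zeta> < 1" for \<zeta>
        by (rule odd_rigid[OF GP(1) GP(2) odd na that])
      show "\<exists>a b c. b \<in> ball 0 1 - {0} \<and> cmod c = 1 \<and>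
               (\<forall>z\<in>ball 0 1. f z = c * ((z - b) / (1 - cnj b * z)) + a)"
      proof (intro exI conjI ballI)
        show "p \<in> ball 0 1 - {0}" using p1 p0 by simp
        show "cmod \<alpha> = 1" by (rule na)
        fix w :: complex assume w: "w \<in> ball 0 1"
        define \<psi> where "\<psi> = Moebius_function 0 p w"
        have psi1: "cmod \<psi> < 1" unfolding \<psi>_def by (rule Moebius_function_norm_lt_1) (use p1 w in auto)
        have "Moebius_function 0 (-p) \<psi> = w" unfolding \<psi>_def
          by (rule Moebius_function_compose) (use p1 w in auto)
        then have "f w = F \<psi>" by (simp add: F_def)
        also have "\<dots> = \<alpha> * \<psi> + F 0" by (rule Fl[OF psi1])
        also have "\<dots> = \<alpha> * ((w - p) / (1 - cnj p * w)) + F 0"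
          by (simp add: \<psi>_def Moebius_function_simple)
        finally show "f w = \<alpha> * ((w - p) / (1 - cnj p * w)) + F 0" .
      qed
    qed
  qed
  show ?thesis
  proof (intro conjI iffI)
    show "\<forall>z\<in>ball 0 1. cmod (f z - f 0) \<le> cmod z * (2 / (1 + sqrt (1 - (cmod z)\<^sup>2)))"
      using main by simp
    assume "\<exists>z\<in>ball 0 1 - {0}. cmod (f z - f 0) = cmod z * (2 / (1 + sqrt (1 - (cmod z)\<^sup>2)))"
    then show "\<exists>a b c. b \<in> ball 0 1 - {0} \<and> cmod c = 1 \<and>
               (\<forall>z\<in>ball 0 1. f z = c * ((z - b) / (1 - cnj b * z)) + a)"
      using main by auto
  next
    assume "\<exists>a b c. b \<in> ball 0 1 - {0} \<and> cmod c = 1 \<and>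
               (\<forall>z\<in>ball 0 1. f z = c * ((z - b) / (1 - cnj b * z)) + a)"
    then show "\<exists>z\<in>ball 0 1 - {0}. cmod (f z - f 0) = cmod z * (2 / (1 + sqrt (1 - (cmod z)\<^sup>2)))"
      using mobius_extremal by blast
  qed
qed

end
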